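(* Let $c_1,c_2,c_3\in\mathbb{C}$ be three non-aligned points with $c_1+c_2+c_3=0$. For every $\eta>0$ there exist $\epsilon_0\in(0,\eta)$ and $\alpha_0\in(0,\eta)$ such that for every $\rho\in\mathbb{C}$ with $1-\alpha_0\le|\rho|\le1+\alpha_0$, setting $\phi_j(z):=\rho z+\epsilon_0c_j$ for $j\in\{1,2,3\}$, we have $$\overline{\mathbb{D}}\subset\bigcup_{j=1}^3\phi_j(\mathbb{D}),$$ and there are three open sets $H_1,H_2,H_3$ such that $\mathbb{D}=\bigcup_{j=1}^3H_j$, $\overline{\phi_j(H_j)}\subset\mathbb{D}$ and $\overline{\phi_j(\tfrac13H_j)}\subset\tfrac13\mathbb{D}$ for each $j$.
   Context: $\mathbb{D}$ is the unit disc of $\mathbb{C}$; for $E\subset\mathbb{C}$ and $t\in\mathbb{C}^*$, $tE$ is the image of $E$ under $z\mapsto tz$. The sets $H_j$ may depend on $\rho$. *)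

theory Defs
  imports "HOL-Analysis.Analysis"
begin

end

theory Submission
  imports Defs
begin

lemma ns: "(cmod (w + complex_of_real t * c))^2 = (cmod w)^2 + 2*t*Re(c * cnj w) + t^2*(cmod c)^2"
  unfolding cmod_power2 by (simp add: power2_eq_square algebra_simps)

lemma D_ne0:
  fixes c :: "nat \<Rightarrow> complex"
  assumes noncol: "\<not> collinear {c 1, c 2, c 3}" and sum0: "c 1 + c 2 + c 3 = 0"
  shows "Re (c 1) * Im (c 2) - Im (c 1) * Re (c 2) \<noteq> 0"
proof
  assume D: "Re (c 1) * Im (c 2) - Im (c 1) * Re (c 2) = 0"
  have c3: "c 3 = - c 1 - c 2" using sum0 by (simp add: algebra_simps eq_neg_iff_add_eq_0)
  show False
  proof (cases "c 1 = 0")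
    case True
    have "collinear {c 1, c 2, c 3}" unfolding collinear_alt
      apply (rule exI[of _ 0], rule exI[of _ "c 2"])
      using True c3 by (auto intro: exI[of _ 0] exI[of _ 1] exI[of _ "-1"])
    then show False using noncol by simp
  next
    case False
    define l where "l = (Re (c 1) * Re (c 2) + Im (c 1) * Im (c 2)) / ((Re (c 1))^2 + (Im (c 1))^2)"
    have pos: "(Re (c 1))^2 + (Im (c 1))^2 \<noteq> 0" using False
      by (metis complex_eq_0)
    have c2: "c 2 = l *\<^sub>R c 1"
    proof (rule complex_eqI)
      show "Re (c 2) = Re (l *\<^sub>R c 1)"
        using pos D unfolding l_def by (simp add: field_simps power2_eq_square)
      show "Im (c 2) = Im (l *\<^sub>R c 1)"
        using pos D unfolding l_def by (simp add: field_simps power2_eq_square)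
    qed
    have "collinear {c 1, c 2, c 3}" unfolding collinear_alt
      apply (rule exI[of _ 0], rule exI[of _ "c 1"])
      using c2 c3 by (auto intro: exI[of _ 1] exI[of _ l] exI[of _ "-1-l"] simp: algebra_simps)
    then show False using noncol by simp
  qed
qed

lemma re_cnj: "Re (c * cnj w) = Re c * Re w + Im c * Im w" by simp

lemma dirs:
  fixes c :: "nat \<Rightarrow> complex"
  assumes D: "Re (c 1) * Im (c 2) - Im (c 1) * Re (c 2) \<noteq> 0" and sum0: "c 1 + c 2 + c 3 = 0"
  shows "\<exists>\<kappa>>0. \<forall>w. (\<exists>j\<in>{1,2,3}. Re (c j * cnj w) \<le> - \<kappa> * cmod w) \<and> (\<exists>j\<in>{1,2,3}. Re (c j * cnj w) \<ge> \<kappa> * cmod w)"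
proof -
  define a where "a = Re (c 1)" define b where "b = Im (c 1)"
  define p where "p = Re (c 2)" define q where "q = Im (c 2)"
  define d where "d = a * q - b * p"
  define K where "K = \<bar>a\<bar> + \<bar>b\<bar> + \<bar>p\<bar> + \<bar>q\<bar>"
  have d0: "d \<noteq> 0" using D by (simp add: d_def a_def b_def p_def q_def)
  have "a \<noteq> 0 \<or> b \<noteq> 0 \<or> p \<noteq> 0 \<or> q \<noteq> 0" using d0 d_def by auto
  hence K0: "K > 0" unfolding K_def
    using abs_ge_zero[of a] abs_ge_zero[of b] abs_ge_zero[of p] abs_ge_zero[of q]
      zero_less_abs_iff[of a] zero_less_abs_iff[of b] zero_less_abs_iff[of p] zero_less_abs_iff[of q]
    by linarith
  define \<kappa> where "\<kappa> = \<bar>d\<bar> / (6 * K)"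
  have kpos: "\<kappa> > 0" using d0 K0 by (simp add: \<kappa>_def)
  have main: "(\<exists>j\<in>{1,2,3}. Re (c j * cnj w) \<le> - \<kappa> * cmod w) \<and> (\<exists>j\<in>{1,2,3}. Re (c j * cnj w) \<ge> \<kappa> * cmod w)" for w
  proof -
    define x where "x = Re w" define y where "y = Im w"
    define s where "s = Re (c 1 * cnj w)" define t where "t = Re (c 2 * cnj w)"
    have s: "s = a*x + b*y" by (simp add: s_def a_def b_def x_def y_def)
    have t: "t = p*x + q*y" by (simp add: t_def p_def q_def x_def y_def)
    have r3: "Re (c 3 * cnj w) = - s - t"
    proof -
      have "c 3 = - c 1 - c 2" using sum0 by (simp add: algebra_simps eq_neg_iff_add_eq_0)
      then have "Re (c 3 * cnj w) = Re ((- c 1 - c 2) * cnj w)" by (rule arg_cong)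
      also have "\<dots> = - s - t" unfolding s_def t_def by (simp add: algebra_simps)
      finally show ?thesis .
    qed
    have ex: "d * x = q * s - b * t" "d * y = - p * s + a * t"
      by (simp_all add: s t d_def algebra_simps)
    have e1: "\<bar>d\<bar> * \<bar>x\<bar> \<le> \<bar>q\<bar> * \<bar>s\<bar> + \<bar>b\<bar> * \<bar>t\<bar>"
      by (metis abs_mult abs_triangle_ineq4 ex(1))
    have e2: "\<bar>d\<bar> * \<bar>y\<bar> \<le> \<bar>p\<bar> * \<bar>s\<bar> + \<bar>a\<bar> * \<bar>t\<bar>"
      using ex(2) by (metis abs_minus_cancel abs_mult abs_triangle_ineq minus_mult_left)
    have "\<bar>q\<bar> * \<bar>s\<bar> + \<bar>b\<bar> * \<bar>t\<bar> + (\<bar>p\<bar> * \<bar>s\<bar> + \<bar>a\<bar> * \<bar>t\<bar>) \<le> K * (\<bar>s\<bar> + \<bar>t\<bar>)"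
      unfolding K_def by (simp add: algebra_simps mult_right_mono)
    moreover have "cmod w \<le> \<bar>x\<bar> + \<bar>y\<bar>" using cmod_le x_def y_def by simp
    ultimately have "\<bar>d\<bar> * cmod w \<le> K * (\<bar>s\<bar> + \<bar>t\<bar>)"
      using e1 e2 mult_left_mono[of "cmod w" "\<bar>x\<bar> + \<bar>y\<bar>" "\<bar>d\<bar>"]
      by (simp add: algebra_simps)
    hence f: "\<kappa> * cmod w \<le> (\<bar>s\<bar> + \<bar>t\<bar>) / 6"
      using K0 unfolding \<kappa>_def by (simp add: field_simps)
    have L1: "s \<le> -(\<bar>s\<bar>+\<bar>t\<bar>)/6 \<or> t \<le> -(\<bar>s\<bar>+\<bar>t\<bar>)/6 \<or> Re (c 3 * cnj w) \<le> -(\<bar>s\<bar>+\<bar>t\<bar>)/6"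
      unfolding r3 by (auto simp: abs_if)
    have L2: "s \<ge> (\<bar>s\<bar>+\<bar>t\<bar>)/6 \<or> t \<ge> (\<bar>s\<bar>+\<bar>t\<bar>)/6 \<or> Re (c 3 * cnj w) \<ge> (\<bar>s\<bar>+\<bar>t\<bar>)/6"
      unfolding r3 by (auto simp: abs_if)
    have "\<exists>j\<in>{1,2,3::nat}. Re (c j * cnj w) \<le> - (\<bar>s\<bar> + \<bar>t\<bar>) / 6"
      using L1 unfolding s_def t_def by blast
    moreover have "\<exists>j\<in>{1,2,3::nat}. Re (c j * cnj w) \<ge> (\<bar>s\<bar> + \<bar>t\<bar>) / 6"
      using L2 unfolding s_def t_def by blast
    ultimately show ?thesis using f by force
  qed
  show ?thesis using kpos main by blast
qed

lemma bnd:
  assumes "Re (c * cnj w) \<le> -\<kappa> * cmod w" "t \<ge> 0" "cmod c \<le> C"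
  shows "(cmod (w + complex_of_real t * c))^2 \<le> (cmod w)^2 - 2*t*\<kappa>*cmod w + t^2*C^2"
proof -
  have "t * Re (c * cnj w) \<le> t * (-\<kappa> * cmod w)" by (rule mult_left_mono[OF assms(1) assms(2)])
  moreover have "t^2 * (cmod c)^2 \<le> t^2 * C^2"
    using assms by (intro mult_left_mono power_mono) auto
  ultimately show ?thesis unfolding ns by (simp add: algebra_simps)
qed

lemma bnd2:
  assumes "Re (c * cnj w) \<ge> \<kappa> * cmod w" "t \<ge> 0" "cmod c \<le> C"
  shows "(cmod (w + complex_of_real (-t) * c))^2 \<le> (cmod w)^2 - 2*t*\<kappa>*cmod w + t^2*C^2"
proof -
  have "t * Re (c * cnj w) \<ge> t * (\<kappa> * cmod w)" by (rule mult_left_mono[OF assms(1) assms(2)])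
  moreover have "t^2 * (cmod c)^2 \<le> t^2 * C^2"
    using assms by (intro mult_left_mono power_mono) auto
  ultimately show ?thesis unfolding ns by (simp add: algebra_simps)
qed

lemma fin1: "(X::real) \<le> W - 2*P + Q \<Longrightarrow> P \<ge> E/2 \<Longrightarrow> W \<le> A2 \<Longrightarrow> A2 \<le> 1 + 3*a \<Longrightarrow> D2 \<ge> 1 - 2*d
   \<Longrightarrow> Q \<le> E/36 \<Longrightarrow> a = E/12 \<Longrightarrow> d = E/24 \<Longrightarrow> E > 0 \<Longrightarrow> X < D2" by linarith
lemma fin3: "(X::real) \<le> W - 6*P + 9*Q \<Longrightarrow> P \<ge> E/2 \<Longrightarrow> W \<le> A2 \<Longrightarrow> A2 \<le> 1 + 3*a \<Longrightarrow> D2 \<ge> 1 - 6*d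
   \<Longrightarrow> Q \<le> E/36 \<Longrightarrow> a = E/12 \<Longrightarrow> d = E/24 \<Longrightarrow> E > 0 \<Longrightarrow> X < D2" by linarith

theorem lemma3p2:
  fixes c :: "nat \<Rightarrow> complex" and \<eta> :: real
  assumes noncol: "\<not> collinear {c 1, c 2, c 3}"
    and sum0: "c 1 + c 2 + c 3 = 0"
    and eta: "\<eta> > 0"
  shows "\<exists>\<epsilon>0 \<alpha>0 :: real. 0 < \<epsilon>0 \<and> \<epsilon>0 < \<eta> \<and> 0 < \<alpha>0 \<and> \<alpha>0 < \<eta> \<and>
    (\<forall>\<rho> :: complex. 1 - \<alpha>0 \<le> norm \<rho> \<and> norm \<rho> \<le> 1 + \<alpha>0 \<longrightarrow>
      cball 0 1 \<subseteq> (\<Union>j\<in>{1,2,3}. (\<lambda>z. \<rho> * z + complex_of_real \<epsilon>0 * c j) ` ball 0 1) \<and>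
      (\<exists>H :: nat \<Rightarrow> complex set.
         (\<forall>j\<in>{1,2,3}. open (H j)) \<and>
         ball 0 1 = (\<Union>j\<in>{1,2,3}. H j) \<and>
         (\<forall>j\<in>{1,2,3}.
            closure ((\<lambda>z. \<rho> * z + complex_of_real \<epsilon>0 * c j) ` H j) \<subseteq> ball 0 1 \<and>
            closure ((\<lambda>z. \<rho> * z + complex_of_real \<epsilon>0 * c j) ` ((\<lambda>z. (1/3) * z) ` H j))
              \<subseteq> (\<lambda>z. (1/3) * z) ` ball 0 1)))"
proof -
  obtain \<kappa>0 where k0: "\<kappa>0 > 0" and kprop: "\<And>w. (\<exists>j\<in>{1,2,3}. Re (c j * cnj w) \<le> - \<kappa>0 * cmod w) \<and> (\<exists>j\<in>{1,2,3}. Re (c j * cnj w) \<ge> \<kappa>0 * cmod w)"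
    using dirs[OF D_ne0[OF noncol sum0] sum0] by blast
  define \<kappa> where "\<kappa> = min \<kappa>0 1"
  have kp: "\<kappa> > 0" "\<kappa> \<le> 1" "\<kappa> \<le> \<kappa>0" using k0 by (auto simp: \<kappa>_def)
  have kle: "\<kappa> * cmod w \<le> \<kappa>0 * cmod w" for w by (rule mult_right_mono) (use kp in auto)
  have kneg: "\<exists>j\<in>{1,2,3}. Re (c j * cnj w) \<le> - \<kappa> * cmod w" for w
    using kprop[of w] kle[of w] by force
  have kposd: "\<exists>j\<in>{1,2,3}. Re (c j * cnj w) \<ge> \<kappa> * cmod w" for w
    using kprop[of w] kle[of w] by force
  define C where "C = 1 + cmod (c 1) + cmod (c 2) + cmod (c 3)"
  have C1: "C \<ge> 1" unfolding C_def by simp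
  have cC: "cmod (c j) \<le> C" if "j \<in> {1,2,3}" for j
    using that unfolding C_def by auto
  define \<epsilon> where "\<epsilon> = min (\<eta>/2) (min (\<kappa>/(36*C^2)) (1/(12*C)))"
  have ep: "\<epsilon> > 0" unfolding \<epsilon>_def using eta kp C1 by auto
  have epeta: "\<epsilon> < \<eta>" unfolding \<epsilon>_def using eta by auto
  have "\<epsilon> \<le> \<kappa>/(36*C^2)" unfolding \<epsilon>_def by auto
  hence eC2: "\<epsilon> * C^2 \<le> \<kappa>/36" using C1 by (simp add: field_simps)
  have "\<epsilon> \<le> 1/(12*C)" unfolding \<epsilon>_def by auto
  hence eC: "\<epsilon> * C \<le> 1/12" using C1 by (simp add: field_simps)
  have e1: "\<epsilon> \<le> 1/12" using eC C1 ep by (smt (verit) mult_le_cancel_left1)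
  have ek: "\<epsilon> * \<kappa> > 0" using ep kp by simp
  have ekle: "\<epsilon> * \<kappa> \<le> \<epsilon>" using ep kp by simp
  have e2C2: "\<epsilon>^2 * C^2 \<le> \<epsilon> * \<kappa> / 36"
  proof -
    have "\<epsilon>^2 * C^2 = \<epsilon> * (\<epsilon> * C^2)" by (simp add: power2_eq_square)
    also have "\<dots> \<le> \<epsilon> * (\<kappa>/36)" by (rule mult_left_mono[OF eC2]) (use ep in simp)
    finally show ?thesis by simp
  qed
  define \<alpha> where "\<alpha> = \<epsilon> * \<kappa> / 12"
  define \<delta> where "\<delta> = \<epsilon> * \<kappa> / 24"
  have ap: "\<alpha> > 0" "\<alpha> < \<eta>" "\<alpha> \<le> 1/144" unfolding \<alpha>_def using ek ekle epeta e1 by auto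
  have dp: "\<delta> > 0" "\<delta> \<le> 1/288" unfolding \<delta>_def using ek ekle e1 by auto
  show ?thesis
  proof (rule exI[of _ \<epsilon>], rule exI[of _ \<alpha>], intro conjI ep epeta ap(1) ap(2) allI impI)
    fix \<rho> :: complex
    assume \<rho>: "1 - \<alpha> \<le> cmod \<rho> \<and> cmod \<rho> \<le> 1 + \<alpha>"
    have \<rho>0: "\<rho> \<noteq> 0" using \<rho> ap by auto
    show "cball 0 1 \<subseteq> (\<Union>j\<in>{1,2,3}. (\<lambda>z. \<rho> * z + complex_of_real \<epsilon> * c j) ` ball 0 1)"
    proof
      fix y :: complex assume "y \<in> cball 0 1"
      hence y1: "cmod y \<le> 1" by simp
      obtain j where j: "j \<in> {1,2,3}" "Re (c j * cnj y) \<ge> \<kappa> * cmod y" using kposd[of y] by blast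
      have cj: "cmod (c j) \<le> C" using cC[OF j(1)] .
      have key: "cmod (y - complex_of_real \<epsilon> * c j) < 1 - \<alpha>"
      proof (cases "cmod y \<ge> 1/2")
        case True
        have b: "(cmod (y + complex_of_real (-\<epsilon>) * c j))^2 \<le> (cmod y)^2 - 2*\<epsilon>*\<kappa>*cmod y + \<epsilon>^2*C^2"
          by (rule bnd2[OF j(2) _ cj]) (use ep in simp)
        have m: "\<epsilon>*\<kappa>*cmod y \<ge> \<epsilon>*\<kappa>*(1/2)" by (rule mult_left_mono) (use True ek in auto)
        have y2: "(cmod y)^2 \<le> 1" using y1 by (simp add: power_le_one)
        have a2: "(1-\<alpha>)^2 \<ge> 1 - 2*\<alpha>" by (simp add: power2_diff)
        have "(cmod (y - complex_of_real \<epsilon> * c j))^2 < (1-\<alpha>)^2"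
          using b m y2 a2 e2C2 ek unfolding \<alpha>_def by simp
        then show ?thesis by (rule power_less_imp_less_base) (use ap in simp)
      next
        case False
        have "cmod (y - complex_of_real \<epsilon> * c j) \<le> cmod y + \<epsilon> * cmod (c j)"
          using norm_triangle_ineq4[of y "complex_of_real \<epsilon> * c j"] ep by (simp add: norm_mult)
        moreover have "\<epsilon> * cmod (c j) \<le> \<epsilon> * C" by (rule mult_left_mono[OF cj]) (use ep in simp)
        ultimately show ?thesis using False eC ap by linarith
      qed
      define z where "z = (y - complex_of_real \<epsilon> * c j) / \<rho>"
      have "cmod z < 1" unfolding z_def norm_divide using key \<rho> \<rho>0
        by (simp add: divide_less_eq)
      moreover have "\<rho> * z + complex_of_real \<epsilon> * c j = y" using \<rho>0 by (simp add: z_def)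
      ultimately have "y \<in> (\<lambda>z. \<rho> * z + complex_of_real \<epsilon> * c j) ` ball 0 1"
        by (intro image_eqI[of _ _ z]) auto
      then show "y \<in> (\<Union>j\<in>{1,2,3}. (\<lambda>z. \<rho> * z + complex_of_real \<epsilon> * c j) ` ball 0 1)"
        using j(1) by blast
    qed
    define H where "H = (\<lambda>j. {z. cmod z < 1 \<and> cmod (\<rho> * z + complex_of_real \<epsilon> * c j) < 1 - \<delta> \<and>
                     cmod (\<rho> * ((1/3) * z) + complex_of_real \<epsilon> * c j) < 1/3 - \<delta>})"
    have op: "\<forall>j\<in>{1,2,3}. open (H j)"
      unfolding H_def by (intro ballI open_Collect_conj open_Collect_less continuous_on_const continuous_on_norm continuous_on_add continuous_on_mult continuous_on_id)
    have cov: "ball 0 1 = (\<Union>j\<in>{1,2,3}. H j)"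
    proof
      show "(\<Union>j\<in>{1,2,3}. H j) \<subseteq> ball 0 1" unfolding H_def by auto
      show "ball 0 1 \<subseteq> (\<Union>j\<in>{1,2,3}. H j)"
      proof
        fix z :: complex assume "z \<in> ball 0 1"
        hence z1: "cmod z < 1" by simp
        define w where "w = \<rho> * z"
        have "cmod w \<le> (1+\<alpha>) * cmod z" unfolding w_def norm_mult
          by (rule mult_right_mono) (use \<rho> in auto)
        moreover have "(1+\<alpha>) * cmod z < (1+\<alpha>)" using z1 ap by simp
        ultimately have w1: "cmod w < 1 + \<alpha>" by linarith
        obtain j where j: "j \<in> {1,2,3}" "Re (c j * cnj w) \<le> - \<kappa> * cmod w" using kneg[of w] by blast
        have cj: "cmod (c j) \<le> C" using cC[OF j(1)] .
        have A: "cmod (w + complex_of_real \<epsilon> * c j) < 1 - \<delta>"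
          and B: "cmod (w + complex_of_real (3*\<epsilon>) * c j) < 1 - 3*\<delta>"
        proof -
          have "cmod (w + complex_of_real \<epsilon> * c j) < 1 - \<delta> \<and> cmod (w + complex_of_real (3*\<epsilon>) * c j) < 1 - 3*\<delta>"
          proof (cases "cmod w \<ge> 1/2")
            case True
            have b1: "(cmod (w + complex_of_real \<epsilon> * c j))^2 \<le> (cmod w)^2 - 2*\<epsilon>*\<kappa>*cmod w + \<epsilon>^2*C^2"
              by (rule bnd[OF j(2) _ cj]) (use ep in simp)
            have b3: "(cmod (w + complex_of_real (3*\<epsilon>) * c j))^2 \<le> (cmod w)^2 - 2*(3*\<epsilon>)*\<kappa>*cmod w + (3*\<epsilon>)^2*C^2"
              by (rule bnd[OF j(2) _ cj]) (use ep in simp)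
            have m: "\<epsilon>*\<kappa>*cmod w \<ge> \<epsilon>*\<kappa>*(1/2)" by (rule mult_left_mono) (use True ek in auto)
            have w2: "(cmod w)^2 \<le> (1+\<alpha>)^2" by (rule power_mono) (use w1 in auto)
            have aa: "\<alpha> * \<alpha> \<le> \<alpha> * 1" by (rule mult_left_mono) (use ap in auto)
            have a2: "(1+\<alpha>)^2 \<le> 1 + 3*\<alpha>" using aa by (simp add: power2_eq_square algebra_simps)
            have d1: "(1-\<delta>)^2 \<ge> 1 - 2*\<delta>" by (simp add: power2_diff)
            have d3: "(1-3*\<delta>)^2 \<ge> 1 - 6*\<delta>" by (simp add: power2_diff)
            have s3: "(3*\<epsilon>)^2*C^2 = 9 * (\<epsilon>^2*C^2)" by (simp add: power2_eq_square)
            define P where "P = \<epsilon>*\<kappa>*cmod w"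
            define E where "E = \<epsilon>*\<kappa>"
            define Q where "Q = \<epsilon>^2*C^2"
            have b1': "(cmod (w + complex_of_real \<epsilon> * c j))^2 \<le> (cmod w)^2 - 2*P + Q"
              using b1 unfolding P_def Q_def by (simp add: algebra_simps)
            have b3': "(cmod (w + complex_of_real (3*\<epsilon>) * c j))^2 \<le> (cmod w)^2 - 6*P + 9*Q"
              using b3 s3 unfolding P_def Q_def by (simp add: algebra_simps)
            have m': "P \<ge> E/2" using m unfolding P_def E_def by simp
            have eQ: "Q \<le> E/36" using e2C2 unfolding Q_def E_def by simp
            have aE: "\<alpha> = E/12" "\<delta> = E/24" "E > 0" unfolding \<alpha>_def \<delta>_def E_def using ek by auto
            have "(cmod (w + complex_of_real \<epsilon> * c j))^2 < (1-\<delta>)^2"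
              by (rule fin1[OF b1' m' w2 a2 d1 eQ aE])
            hence r1: "cmod (w + complex_of_real \<epsilon> * c j) < 1 - \<delta>"
              by (rule power_less_imp_less_base) (use dp in simp)
            have "(cmod (w + complex_of_real (3*\<epsilon>) * c j))^2 < (1-3*\<delta>)^2"
              by (rule fin3[OF b3' m' w2 a2 d3 eQ aE])
            hence r3: "cmod (w + complex_of_real (3*\<epsilon>) * c j) < 1 - 3*\<delta>"
              by (rule power_less_imp_less_base) (use dp in simp)
            show ?thesis using r1 r3 by simp
          next
            case False
            have t1: "cmod (w + complex_of_real \<epsilon> * c j) \<le> cmod w + \<epsilon> * cmod (c j)"
              using norm_triangle_ineq[of w "complex_of_real \<epsilon> * c j"] ep by (simp add: norm_mult)
            have t3: "cmod (w + complex_of_real (3*\<epsilon>) * c j) \<le> cmod w + 3 * (\<epsilon> * cmod (c j))"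
              using norm_triangle_ineq[of w "complex_of_real (3*\<epsilon>) * c j"] ep by (simp add: norm_mult)
            have "\<epsilon> * cmod (c j) \<le> \<epsilon> * C" by (rule mult_left_mono[OF cj]) (use ep in simp)
            then show ?thesis using False t1 t3 eC dp by linarith
          qed
          then show "cmod (w + complex_of_real \<epsilon> * c j) < 1 - \<delta>"
            and "cmod (w + complex_of_real (3*\<epsilon>) * c j) < 1 - 3*\<delta>" by auto
        qed
        have eq3: "w + complex_of_real (3*\<epsilon>) * c j = 3 * (\<rho> * ((1/3) * z) + complex_of_real \<epsilon> * c j)"
          unfolding w_def by (simp add: algebra_simps)
        have "cmod (\<rho> * ((1/3) * z) + complex_of_real \<epsilon> * c j) = cmod (w + complex_of_real (3*\<epsilon>) * c j) / 3"
          unfolding eq3 norm_mult by simp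
        hence "cmod (\<rho> * ((1/3) * z) + complex_of_real \<epsilon> * c j) < 1/3 - \<delta>" using B by simp
        hence "z \<in> H j" unfolding H_def using z1 A w_def by simp
        then show "z \<in> (\<Union>j\<in>{1,2,3}. H j)" using j(1) by blast
      qed
    qed
    have cl: "closure ((\<lambda>z. \<rho> * z + complex_of_real \<epsilon> * c j) ` H j) \<subseteq> ball 0 1 \<and>
            closure ((\<lambda>z. \<rho> * z + complex_of_real \<epsilon> * c j) ` ((\<lambda>z. (1/3) * z) ` H j))
              \<subseteq> (\<lambda>z. (1/3) * z) ` ball 0 1" for j
    proof
      have "(\<lambda>z. \<rho> * z + complex_of_real \<epsilon> * c j) ` H j \<subseteq> cball 0 (1-\<delta>)"
        unfolding H_def by auto
      hence "closure ((\<lambda>z. \<rho> * z + complex_of_real \<epsilon> * c j) ` H j) \<subseteq> cball 0 (1-\<delta>)"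
        by (rule closure_minimal) simp
      moreover have "cball 0 (1-\<delta>) \<subseteq> ball (0::complex) 1" using dp by auto
      ultimately show "closure ((\<lambda>z. \<rho> * z + complex_of_real \<epsilon> * c j) ` H j) \<subseteq> ball 0 1" by blast
      have "(\<lambda>z. \<rho> * z + complex_of_real \<epsilon> * c j) ` ((\<lambda>z. (1/3) * z) ` H j) \<subseteq> cball 0 (1/3-\<delta>)"
        unfolding H_def by auto
      hence "closure ((\<lambda>z. \<rho> * z + complex_of_real \<epsilon> * c j) ` ((\<lambda>z. (1/3) * z) ` H j)) \<subseteq> cball 0 (1/3-\<delta>)"
        by (rule closure_minimal) simp
      moreover have "cball 0 (1/3-\<delta>) \<subseteq> (\<lambda>z. (1/3) * z) ` ball (0::complex) 1"
      proof
        fix y :: complex assume "y \<in> cball 0 (1/3-\<delta>)"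
        hence "cmod y \<le> 1/3 - \<delta>" by simp
        hence "3 * y \<in> ball 0 1" using dp by (simp add: norm_mult)
        moreover have "y = (1/3) * (3 * y)" by simp
        ultimately show "y \<in> (\<lambda>z. (1/3) * z) ` ball 0 1" by blast
      qed
      ultimately show "closure ((\<lambda>z. \<rho> * z + complex_of_real \<epsilon> * c j) ` ((\<lambda>z. (1/3) * z) ` H j))
              \<subseteq> (\<lambda>z. (1/3) * z) ` ball 0 1" by blast
    qed
    show "\<exists>H :: nat \<Rightarrow> complex set.
         (\<forall>j\<in>{1,2,3}. open (H j)) \<and>
         ball 0 1 = (\<Union>j\<in>{1,2,3}. H j) \<and>
         (\<forall>j\<in>{1,2,3}.
            closure ((\<lambda>z. \<rho> * z + complex_of_real \<epsilon> * c j) ` H j) \<subseteq> ball 0 1 \<and>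
            closure ((\<lambda>z. \<rho> * z + complex_of_real \<epsilon> * c j) ` ((\<lambda>z. (1/3) * z) ` H j))
              \<subseteq> (\<lambda>z. (1/3) * z) ` ball 0 1)"
      by (rule exI[of _ H]) (use op cov cl in simp)
  qed
qed

end
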